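(* Let $V$ be a real vector space of dimension $n\ge 3$ and let $R\in\mathfrak{r}(V)$. Then $R\in\mathfrak{a}(V)\oplus\mathfrak{s}(V)$ if and only if $R^*\in\mathfrak{r}(V)$.
   Context: $\mathfrak{r}(V)$ is the space of $(0,4)$-tensors $R$ on $V$ satisfying $R(x,y,z,w)=-R(y,x,z,w)$ and $R(x,y,z,w)+R(y,z,x,w)+R(z,x,y,w)=0$ for all $x,y,z,w\in V$ (generalized curvature tensors). For a $(0,4)$-tensor $R$ its conjugate is $R^*(x,y,z,w):=-R(x,y,w,z)$. $\mathfrak{a}(V)=\{R\in\mathfrak{r}(V): R(x,y,z,w)=-R(x,y,w,z)\}$ (algebraic curvature tensors) and $\mathfrak{s}(V)=\{R\in\mathfrak{r}(V): R(x,y,z,w)=R(x,y,w,z)\}$. *)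

theory Defs
  imports "HOL-Analysis.Analysis"
begin

definition tensor4 :: "('v::real_vector \<Rightarrow> 'v \<Rightarrow> 'v \<Rightarrow> 'v \<Rightarrow> real) \<Rightarrow> bool" where
  "tensor4 R \<longleftrightarrow>
     (\<forall>y z w. linear (\<lambda>x. R x y z w)) \<and>
     (\<forall>x z w. linear (\<lambda>y. R x y z w)) \<and>
     (\<forall>x y w. linear (\<lambda>z. R x y z w)) \<and>
     (\<forall>x y z. linear (\<lambda>w. R x y z w))"

definition gen_curv :: "('v::real_vector \<Rightarrow> 'v \<Rightarrow> 'v \<Rightarrow> 'v \<Rightarrow> real) \<Rightarrow> bool" where
  "gen_curv R \<longleftrightarrow> tensor4 R \<and>
     (\<forall>x y z w. R x y z w = - R y x z w) \<and>
     (\<forall>x y z w. R x y z w + R y z x w + R z x y w = 0)"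

definition conj_tensor :: "('v \<Rightarrow> 'v \<Rightarrow> 'v \<Rightarrow> 'v \<Rightarrow> real) \<Rightarrow> ('v \<Rightarrow> 'v \<Rightarrow> 'v \<Rightarrow> 'v \<Rightarrow> real)" where
  "conj_tensor R = (\<lambda>x y z w. - R x y w z)"

definition alg_curv :: "('v::real_vector \<Rightarrow> 'v \<Rightarrow> 'v \<Rightarrow> 'v \<Rightarrow> real) \<Rightarrow> bool" where
  "alg_curv R \<longleftrightarrow> gen_curv R \<and> (\<forall>x y z w. R x y z w = - R x y w z)"

definition sym_curv :: "('v::real_vector \<Rightarrow> 'v \<Rightarrow> 'v \<Rightarrow> 'v \<Rightarrow> real) \<Rightarrow> bool" where
  "sym_curv R \<longleftrightarrow> gen_curv R \<and> (\<forall>x y z w. R x y z w = R x y w z)"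

text \<open>Membership in a(V) + s(V) (the sum is direct since a(V) \<inter> s(V) = 0).\<close>
definition in_a_plus_s :: "('v::real_vector \<Rightarrow> 'v \<Rightarrow> 'v \<Rightarrow> 'v \<Rightarrow> real) \<Rightarrow> bool" where
  "in_a_plus_s R \<longleftrightarrow> (\<exists>A S. alg_curv A \<and> sym_curv S \<and> R = (\<lambda>x y z w. A x y z w + S x y z w))"

end

theory Submission
  imports Defs
begin

lemma tensor4_swap: "tensor4 R \<Longrightarrow> tensor4 (\<lambda>x y z w. R x y w z)"
  unfolding tensor4_def by auto

lemma lin_comb:
  fixes f g :: "'a::real_vector \<Rightarrow> real"
  assumes "linear f" "linear g"
  shows "linear (\<lambda>x. a * f x + b * g x)"
  using assms unfolding linear_iff by (auto simp: algebra_simps)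

lemma tensor4_lin:
  assumes "tensor4 R" "tensor4 T"
  shows "tensor4 (\<lambda>x y z w. a * R x y z w + b * T x y z w)"
  using assms unfolding tensor4_def
  by (auto intro!: lin_comb)

lemma tensor4_neg: "tensor4 R \<Longrightarrow> tensor4 (\<lambda>x y z w. - R x y z w)"
  using tensor4_lin[of R R "-1" 0] by simp

theorem lemma2p10:
  fixes R :: "'v::euclidean_space \<Rightarrow> 'v \<Rightarrow> 'v \<Rightarrow> 'v \<Rightarrow> real"
  assumes "DIM('v) \<ge> 3"
    and "gen_curv R"
  shows "in_a_plus_s R \<longleftrightarrow> gen_curv (conj_tensor R)"
proof
  assume "in_a_plus_s R"
  then obtain A S where A: "alg_curv A" and S: "sym_curv S"
    and R: "R = (\<lambda>x y z w. A x y z w + S x y z w)"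
    unfolding in_a_plus_s_def by blast
  have t: "tensor4 (conj_tensor R)"
  proof -
    have "tensor4 R" using assms(2) unfolding gen_curv_def by blast
    from tensor4_neg[OF tensor4_swap[OF this]] show ?thesis unfolding conj_tensor_def .
  qed
  have b: "\<And>x y z w. conj_tensor R x y z w + conj_tensor R y z x w + conj_tensor R z x y w = 0"
  proof -
    fix x y z w
    have "A x y z w + A y z x w + A z x y w = 0" "S x y z w + S y z x w + S z x y w = 0"
      using A S unfolding alg_curv_def sym_curv_def gen_curv_def by blast+
    moreover have "\<And>x y z w. A x y w z = - A x y z w" "\<And>x y z w. S x y w z = S x y z w"
      using A S unfolding alg_curv_def sym_curv_def by blast+
    ultimately show "conj_tensor R x y z w + conj_tensor R y z x w + conj_tensor R z x y w = 0"
      unfolding conj_tensor_def R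
      by (smt (verit))
  qed
  show "gen_curv (conj_tensor R)"
    unfolding gen_curv_def
  proof (intro conjI allI t b)
    fix x y z w
    show "conj_tensor R x y z w = - conj_tensor R y x z w"
    proof -
      have "R x y w z = - R y x w z" using assms(2) unfolding gen_curv_def by blast
      then show ?thesis unfolding conj_tensor_def by simp
    qed
  qed
next
  assume c: "gen_curv (conj_tensor R)"
  have tR: "tensor4 R" and aR: "\<And>x y z w. R x y z w = - R y x z w"
    and bR: "\<And>x y z w. R x y z w + R y z x w + R z x y w = 0"
    using assms(2) unfolding gen_curv_def by blast+
  have tC: "tensor4 (\<lambda>x y z w. R x y w z)" using tensor4_swap[OF tR] .
  have bC: "\<And>x y z w. R x y w z + R y z w x + R z x w y = 0"
  proof -
    fix x y z w
    have "- R x y w z + - R y z w x + - R z x w y = 0"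
      using c unfolding gen_curv_def conj_tensor_def by blast
    then show "R x y w z + R y z w x + R z x w y = 0" by linarith
  qed
  define A where "A = (\<lambda>x y z w. (1/2) * R x y z w + (-1/2) * R x y w z)"
  define S where "S = (\<lambda>x y z w. (1/2) * R x y z w + (1/2) * R x y w z)"
  have tA: "tensor4 A" unfolding A_def using tensor4_lin[OF tR tC, of "1/2" "-1/2"] .
  have tS: "tensor4 S" unfolding S_def using tensor4_lin[OF tR tC, of "1/2" "1/2"] .
  have "alg_curv A"
    unfolding alg_curv_def gen_curv_def
  proof (intro conjI allI tA)
    fix x y z w
    show "A x y z w = - A y x z w" unfolding A_def using aR[of x y z w] aR[of x y w z] by linarith
    show "A x y z w + A y z x w + A z x y w = 0" unfolding A_def
      using bR[of x y z w] bC[where x=x and y=y and z=z and w=w] by linarith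
    show "A x y z w = - A x y w z" unfolding A_def by simp
  qed
  moreover have "sym_curv S"
    unfolding sym_curv_def gen_curv_def
  proof (intro conjI allI tS)
    fix x y z w
    show "S x y z w = - S y x z w" unfolding S_def using aR[of x y z w] aR[of x y w z] by linarith
    show "S x y z w + S y z x w + S z x y w = 0" unfolding S_def
      using bR[of x y z w] bC[where x=x and y=y and z=z and w=w] by linarith
    show "S x y z w = S x y w z" unfolding S_def by simp
  qed
  moreover have "R = (\<lambda>x y z w. A x y z w + S x y z w)"
    unfolding A_def S_def by (intro ext) simp
  ultimately show "in_a_plus_s R" unfolding in_a_plus_s_def by blast
qed

end
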